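(* Let $(T_0,\widetilde T_0)$ be a joint pair of closed abstract Friedrichs operators on a complex Hilbert space $\mathcal{H}$, with $T_1:=\widetilde T_0^*$, $\widetilde T_1:=T_0^*$ and $\mathcal{W}_0:=\operatorname{dom}T_0=\operatorname{dom}\widetilde T_0$. Then the restrictions $T_1|_{\mathcal{W}_0+\operatorname{ker}\widetilde T_1}$ and $\widetilde T_1|_{\mathcal{W}_0+\operatorname{ker}T_1}$ are mutually adjoint, i.e. $(T_1|_{\mathcal{W}_0+\operatorname{ker}\widetilde T_1})^*=\widetilde T_1|_{\mathcal{W}_0+\operatorname{ker}T_1}$ and $(\widetilde T_1|_{\mathcal{W}_0+\operatorname{ker}T_1})^*=T_1|_{\mathcal{W}_0+\operatorname{ker}\widetilde T_1}$, and each of them is a bijection from its domain onto $\mathcal{H}$.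
   Context: $\mathcal{H}$ is a complex Hilbert space with inner product $\langle\cdot,\cdot\rangle$ and norm $\|\cdot\|$. A pair $(T,\widetilde T)$ of densely defined linear operators on $\mathcal{H}$ is a joint pair of abstract Friedrichs operators if: (T1) $T$ and $\widetilde T$ have a common dense domain $\mathcal{D}$ and $\langle T\varphi,\psi\rangle=\langle\varphi,\widetilde T\psi\rangle$ for all $\varphi,\psi\in\mathcal{D}$; (T2) there is $c>0$ with $\|(T+\widetilde T)\varphi\|\le c\|\varphi\|$ for all $\varphi\in\mathcal{D}$; (T3) there is $\mu_0>0$ with $\langle (T+\widetilde T)\varphi,\varphi\rangle\ge 2\mu_0\|\varphi\|^2$ for all $\varphi\in\mathcal{D}$. A joint pair of closed abstract Friedrichs operators is such a pair $(T_0,\widetilde T_0)$ in which both operators are closed. One has $T_0\subseteq T_1$, $\widetilde T_0\subseteq\widetilde T_1$ and $\operatorname{dom}T_1=\operatorname{dom}\widetilde T_1$. *)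

theory Defs
  imports "HOL-Analysis.Analysis" "HOL-Library.Complex_Order"
begin

text \<open>Complex inner product spaces (not in the distribution): a real vector space
  with a compatible complex scalar multiplication and a complex inner product
  (linear in the first argument) inducing the norm.  A complex Hilbert space
  is a type of class complex_inner that is also complete_space.\<close>

class complex_vector = real_vector +
  fixes scaleC :: "complex \<Rightarrow> 'a \<Rightarrow> 'a"
  assumes scaleC_scaleR: "scaleC (complex_of_real r) x = scaleR r x"
    and scaleC_add_right: "scaleC a (x + y) = scaleC a x + scaleC a y"
    and scaleC_add_left: "scaleC (a + b) x = scaleC a x + scaleC b x"
    and scaleC_scaleC: "scaleC a (scaleC b x) = scaleC (a * b) x"
    and scaleC_one: "scaleC 1 x = x"

class complex_inner = complex_vector + real_normed_vector +
  fixes cinner :: "'a \<Rightarrow> 'a \<Rightarrow> complex"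
  assumes cinner_commute: "cinner x y = cnj (cinner y x)"
    and cinner_add_left: "cinner (x + y) z = cinner x z + cinner y z"
    and cinner_scaleC_left: "cinner (scaleC r x) y = r * cinner x y"
    and cinner_ge_zero: "0 \<le> cinner x x"
    and cinner_eq_zero_iff: "cinner x x = 0 \<longleftrightarrow> x = 0"
    and norm_eq_sqrt_cinner: "norm x = sqrt (Re (cinner x x))"

text \<open>(Possibly unbounded) linear operators on H are represented by their graphs
  G :: ('a \<times> 'a) set: complex linear subspaces of H \<times> H that are functional.\<close>

definition is_linop :: "('a::complex_vector \<times> 'a) set \<Rightarrow> bool" where
  "is_linop G \<longleftrightarrow> (0, 0) \<in> G
     \<and> (\<forall>x y u v. (x, y) \<in> G \<longrightarrow> (u, v) \<in> G \<longrightarrow> (x + u, y + v) \<in> G)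
     \<and> (\<forall>c x y. (x, y) \<in> G \<longrightarrow> (scaleC c x, scaleC c y) \<in> G)
     \<and> (\<forall>x y z. (x, y) \<in> G \<longrightarrow> (x, z) \<in> G \<longrightarrow> y = z)"

definition op_dom :: "('a \<times> 'a) set \<Rightarrow> 'a set" where
  "op_dom G = Domain G"

definition op_apply :: "('a \<times> 'a) set \<Rightarrow> 'a \<Rightarrow> 'a" where
  "op_apply G x = (THE y. (x, y) \<in> G)"

definition op_ker :: "('a::zero \<times> 'a) set \<Rightarrow> 'a set" where
  "op_ker G = {x. (x, 0) \<in> G}"

definition densely_defined :: "('a::topological_space \<times> 'a) set \<Rightarrow> bool" where
  "densely_defined G \<longleftrightarrow> closure (op_dom G) = UNIV"

definition closed_op :: "('a::topological_space \<times> 'a) set \<Rightarrow> bool" where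
  "closed_op G \<longleftrightarrow> closed G"

definition op_adjoint :: "('a::complex_inner \<times> 'a) set \<Rightarrow> ('a \<times> 'a) set" where
  "op_adjoint G = {(y, z). \<forall>(x, w) \<in> G. cinner w y = cinner x z}"

definition op_restrict :: "('a \<times> 'a) set \<Rightarrow> 'a set \<Rightarrow> ('a \<times> 'a) set" where
  "op_restrict G S = {(x, y) \<in> G. x \<in> S}"

definition set_plus_vec :: "'a::plus set \<Rightarrow> 'a set \<Rightarrow> 'a set" where
  "set_plus_vec A B = {u + v | u v. u \<in> A \<and> v \<in> B}"

definition friedrichs_pair :: "('a::complex_inner \<times> 'a) set \<Rightarrow> ('a \<times> 'a) set \<Rightarrow> bool" where
  "friedrichs_pair T Tt \<longleftrightarrow>
     is_linop T \<and> is_linop Tt \<and> densely_defined T \<and> densely_defined Tt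
     \<and> op_dom T = op_dom Tt
     \<and> (\<forall>\<phi> \<in> op_dom T. \<forall>\<psi> \<in> op_dom T.
          cinner (op_apply T \<phi>) \<psi> = cinner \<phi> (op_apply Tt \<psi>))
     \<and> (\<exists>c > 0. \<forall>\<phi> \<in> op_dom T. norm (op_apply T \<phi> + op_apply Tt \<phi>) \<le> c * norm \<phi>)
     \<and> (\<exists>\<mu>0 > 0. \<forall>\<phi> \<in> op_dom T.
          cinner (op_apply T \<phi> + op_apply Tt \<phi>) \<phi> \<ge> complex_of_real (2 * \<mu>0 * (norm \<phi>)\<^sup>2))"

definition closed_friedrichs_pair :: "('a::complex_inner \<times> 'a) set \<Rightarrow> ('a \<times> 'a) set \<Rightarrow> bool" where
  "closed_friedrichs_pair T Tt \<longleftrightarrow> friedrichs_pair T Tt \<and> closed_op T \<and> closed_op Tt"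

end

theory Submission
  imports Defs
begin

lemma cinner_zero_left[simp]: "cinner 0 (y::'a::complex_inner) = 0"
  using cinner_add_left[of 0 0 y] by simp

lemma cinner_zero_right[simp]: "cinner (x::'a::complex_inner) 0 = 0"
  using cinner_commute[of x 0] by simp

lemma cinner_add_right: "cinner (x::'a::complex_inner) (y + z) = cinner x y + cinner x z"
  using cinner_commute[of x "y+z"] cinner_add_left[of y z x] cinner_commute[of y x] cinner_commute[of z x]
  by simp

lemma cinner_minus_left: "cinner (- x) (y::'a::complex_inner) = - cinner x y"
proof -
  have "cinner (-x) y + cinner x y = 0" using cinner_add_left[of "-x" x y] by simp
  then show ?thesis by (simp add: eq_neg_iff_add_eq_0)
qed

lemma cinner_minus_right: "cinner (x::'a::complex_inner) (- y) = - cinner x y"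
  using cinner_commute[of x "-y"] cinner_minus_left[of y x] cinner_commute[of y x] by simp

lemma cinner_diff_left: "cinner (x - y) (z::'a::complex_inner) = cinner x z - cinner y z"
  using cinner_add_left[of x "-y" z] cinner_minus_left[of y z] by simp

lemma cinner_diff_right: "cinner (x::'a::complex_inner) (y - z) = cinner x y - cinner x z"
  using cinner_add_right[of x y "-z"] cinner_minus_right[of x z] by simp

lemma cinner_scaleC_right: "cinner (x::'a::complex_inner) (scaleC r y) = cnj r * cinner x y"
  using cinner_commute[of x "scaleC r y"] cinner_scaleC_left[of r y x] cinner_commute[of y x] by simp

lemma cinner_scaleR_left: "cinner (scaleR r x) (y::'a::complex_inner) = complex_of_real r * cinner x y"
  using cinner_scaleC_left[of "complex_of_real r" x y] by (simp add: scaleC_scaleR)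

lemma cinner_scaleR_right: "cinner (x::'a::complex_inner) (scaleR r y) = complex_of_real r * cinner x y"
  using cinner_scaleC_right[of x "complex_of_real r" y] by (simp add: scaleC_scaleR)

lemma cinner_self: "cinner (x::'a::complex_inner) x = complex_of_real ((norm x)^2)"
proof -
  have "Im (cinner x x) = 0" "Re (cinner x x) \<ge> 0"
    using cinner_ge_zero[of x] by (auto simp: less_eq_complex_def)
  then show ?thesis by (simp add: norm_eq_sqrt_cinner complex_eq_iff)
qed

lemma Re_cinner_self: "Re (cinner (x::'a::complex_inner) x) = (norm x)^2"
  by (simp add: cinner_self)

lemma scaleC_minus1: "scaleC (-1) (x::'a::complex_vector) = - x"
  using scaleC_scaleR[of "-1" x] by simp

lemma scaleC_zero_right: "scaleC a (0::'a::complex_vector) = 0"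
  using scaleC_add_right[of a 0 0] by simp

lemma cs_aux: "n > 0 \<Longrightarrow> xx - cnj (a / complex_of_real n) * a - (a / complex_of_real n) * cnj a + (a / complex_of_real n) * cnj (a / complex_of_real n) * complex_of_real n = xx - a*cnj a / complex_of_real n"
  by (simp add: field_simps)

lemma cauchy_schwarz: "cmod (cinner x y) \<le> norm x * norm (y::'a::complex_inner)"
proof (cases "y = 0")
  case True then show ?thesis by simp
next
  case False
  define a where "a = cinner x y"
  define n where "n = (norm y)^2"
  define t where "t = a / complex_of_real n"
  have yy: "cinner y y = complex_of_real n" unfolding n_def by (rule cinner_self)
  have yx: "cinner y x = cnj a" unfolding a_def by (rule cinner_commute)
  have ny: "n > 0" using False by (simp add: n_def)
  have "0 \<le> Re (cinner (x - scaleC t y) (x - scaleC t y))"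
    by (simp add: Re_cinner_self)
  also have "cinner (x - scaleC t y) (x - scaleC t y) =
      cinner x x - cnj t * a - t * cnj a + t * cnj t * complex_of_real n"
    by (simp add: cinner_diff_left cinner_diff_right cinner_scaleC_left cinner_scaleC_right algebra_simps yy a_def cinner_commute[of y x])
  also have "\<dots> = cinner x x - a * cnj a / complex_of_real n"
    unfolding t_def by (rule cs_aux[OF ny])
  also have "a * cnj a = complex_of_real ((cmod a)^2)"
    by (rule complex_norm_square[symmetric])
  finally have "0 \<le> (norm x)^2 - (cmod a)^2 / n"
    unfolding cinner_self by simp
  then have "(cmod a)^2 \<le> (norm x)^2 * n"
    using ny by (simp add: field_simps)
  then have "(cmod a)^2 \<le> (norm x * norm y)^2"
    by (simp add: n_def power_mult_distrib)
  then show ?thesis unfolding a_def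
    by (meson mult_nonneg_nonneg norm_ge_zero power2_le_imp_le)
qed

lemma bb_cinner: "bounded_bilinear (cinner :: 'a::complex_inner \<Rightarrow> 'a \<Rightarrow> complex)"
proof
  fix a a' b b' :: 'a and r :: real
  show "cinner (a + a') b = cinner a b + cinner a' b" by (rule cinner_add_left)
  show "cinner a (b + b') = cinner a b + cinner a b'" by (rule cinner_add_right)
  show "cinner (r *\<^sub>R a) b = r *\<^sub>R cinner a b" by (simp add: cinner_scaleR_left scaleR_conv_of_real)
  show "cinner a (r *\<^sub>R b) = r *\<^sub>R cinner a b" by (simp add: cinner_scaleR_right scaleR_conv_of_real)
  show "\<exists>K. \<forall>a b::'a. norm (cinner a b) \<le> norm a * norm b * K"
    by (rule exI[of _ 1]) (simp add: cauchy_schwarz)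
qed

lemmas tendsto_cinner = bounded_bilinear.tendsto[OF bb_cinner]
lemmas continuous_on_cinner = bounded_bilinear.continuous_on[OF bb_cinner]


lemma linop_add: "is_linop G \<Longrightarrow> (x,a)\<in>G \<Longrightarrow> (y,b)\<in>G \<Longrightarrow> (x+y, a+b)\<in>G"
  unfolding is_linop_def by blast

lemma linop_scaleC: "is_linop G \<Longrightarrow> (x,a)\<in>G \<Longrightarrow> (scaleC c x, scaleC c a)\<in>G"
  unfolding is_linop_def by blast

lemma linop_zero: "is_linop G \<Longrightarrow> (0,0)\<in>G"
  unfolding is_linop_def by blast

lemma linop_fun: "is_linop G \<Longrightarrow> (x,a)\<in>G \<Longrightarrow> (x,b)\<in>G \<Longrightarrow> a = b"
  unfolding is_linop_def by blast

lemma linop_scaleR: "is_linop G \<Longrightarrow> (x,a)\<in>G \<Longrightarrow> (scaleR r x, scaleR r a)\<in>G"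
  using linop_scaleC[of G x a "complex_of_real r"] by (simp add: scaleC_scaleR)

lemma linop_uminus: "is_linop G \<Longrightarrow> (x,a)\<in>G \<Longrightarrow> (- x, - a)\<in>G"
  using linop_scaleC[of G x a "-1"] by (simp add: scaleC_minus1)

lemma linop_diff: "is_linop G \<Longrightarrow> (x,a)\<in>G \<Longrightarrow> (y,b)\<in>G \<Longrightarrow> (x-y, a-b)\<in>G"
  using linop_add[of G x a "-y" "-b"] linop_uminus[of G y b] by simp

lemma op_apply_eq: "is_linop G \<Longrightarrow> (x,a)\<in>G \<Longrightarrow> op_apply G x = a"
  unfolding op_apply_def by (rule the_equality) (auto dest: linop_fun)

lemma op_apply_in: "is_linop G \<Longrightarrow> x \<in> Domain G \<Longrightarrow> (x, op_apply G x)\<in>G"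
  using op_apply_eq by fastforce

lemma adj_iff: "(y,z) \<in> op_adjoint G \<longleftrightarrow> (\<forall>x w. (x,w)\<in>G \<longrightarrow> cinner w y = cinner x z)"
  unfolding op_adjoint_def by auto

lemma adj_add: "(y,z) \<in> op_adjoint G \<Longrightarrow> (y',z') \<in> op_adjoint G \<Longrightarrow> (y+y',z+z') \<in> op_adjoint G"
  unfolding adj_iff by (simp add: cinner_add_right)

lemma adj_diff: "(y,z) \<in> op_adjoint G \<Longrightarrow> (y',z') \<in> op_adjoint G \<Longrightarrow> (y-y',z-z') \<in> op_adjoint G"
  unfolding adj_iff by (simp add: cinner_diff_right)

lemma adj_scaleC: "(y,z) \<in> op_adjoint G \<Longrightarrow> (scaleC c y, scaleC c z) \<in> op_adjoint G"
  unfolding adj_iff by (simp add: cinner_scaleC_right)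

lemma adj_scaleR: "(y,z) \<in> op_adjoint G \<Longrightarrow> (scaleR c y, scaleR c z) \<in> op_adjoint G"
  unfolding adj_iff by (simp add: cinner_scaleR_right)

lemma adj_zero: "(0,0) \<in> op_adjoint G"
  unfolding adj_iff by simp

lemma adj_closed: "closed (op_adjoint (G::('a::complex_inner \<times> 'a) set))"
proof -
  have eq: "op_adjoint G = (\<Inter>p\<in>G. {q. cinner (snd p) (fst q) = cinner (fst p) (snd q)})"
    unfolding op_adjoint_def by (auto; drule (1) bspec; simp)
  show ?thesis unfolding eq
    by (intro closed_INT ballI closed_Collect_eq continuous_on_cinner continuous_intros)
qed

lemma dense_orth:
  fixes a :: "'a::complex_inner"
  assumes "closure D = UNIV" "\<And>w. w\<in>D \<Longrightarrow> cinner w a = 0"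
  shows "a = 0"
proof -
  have "closed {w. cinner w a = 0}"
    by (rule closed_Collect_eq) (intro continuous_on_cinner continuous_intros)+
  moreover have "D \<subseteq> {w. cinner w a = 0}" using assms(2) by auto
  ultimately have "closure D \<subseteq> {w. cinner w a = 0}" by (rule closure_minimal[rotated])
  then have "cinner a a = 0" using assms(1) by auto
  then show ?thesis by (simp add: cinner_eq_zero_iff)
qed

lemma adj_fun:
  assumes "closure (Domain G) = UNIV" "(y,z) \<in> op_adjoint G" "(y,z') \<in> op_adjoint G"
  shows "z = z'"
proof -
  have "(0, z - z') \<in> op_adjoint G" using adj_diff[OF assms(2,3)] by simp
  then have "z - z' = 0"
    by (intro dense_orth[OF assms(1)]) (auto simp: adj_iff)
  then show ?thesis by simp
qed

lemma adj_linop: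
  assumes "closure (Domain G) = UNIV"
  shows "is_linop (op_adjoint G)"
  unfolding is_linop_def using adj_zero adj_add adj_scaleC adj_fun[OF assms] by blast

lemma gen_adj_eq:
  assumes "A \<subseteq> op_adjoint B" "\<And>f. \<exists>u. (u,f) \<in> A"
    and "\<And>y. (y,0) \<in> op_adjoint B \<Longrightarrow> y = 0"
  shows "op_adjoint B = A"
proof
  show "op_adjoint B \<subseteq> A"
  proof
    fix p assume p: "p \<in> op_adjoint B"
    obtain y z where yz: "p = (y,z)" by (cases p)
    obtain u where u: "(u,z) \<in> A" using assms(2) by blast
    then have "(u,z) \<in> op_adjoint B" using assms(1) by blast
    from adj_diff[OF p[unfolded yz] this] have "(y-u, 0) \<in> op_adjoint B" by simp
    then have "y = u" using assms(3) by fastforce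
    then show "p \<in> A" using u yz by simp
  qed
qed (rule assms(1))


lemma norm_add_sq: "(norm (a + b))^2 = (norm a)^2 + 2 * Re (cinner a b) + (norm (b::'a::complex_inner))^2"
proof -
  have "(norm (a+b))^2 = Re (cinner (a+b) (a+b))" by (simp add: Re_cinner_self)
  also have "\<dots> = Re (cinner a a) + Re (cinner a b) + Re (cinner b a) + Re (cinner b b)"
    by (simp add: cinner_add_left cinner_add_right)
  also have "Re (cinner b a) = Re (cinner a b)" by (subst cinner_commute) simp
  finally show ?thesis by (simp add: Re_cinner_self)
qed

lemma norm_diff_sq: "(norm (a - b))^2 = (norm a)^2 - 2 * Re (cinner a b) + (norm (b::'a::complex_inner))^2"
  using norm_add_sq[of a "-b"] by (simp add: cinner_minus_right)

lemma parallelogram: "(norm (a + b))^2 + (norm (a - b))^2 = 2*(norm a)^2 + 2*(norm (b::'a::complex_inner))^2"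
  using norm_add_sq[of a b] norm_diff_sq[of a b] by simp

lemma projection:
  fixes M :: "'a::{complex_inner,complete_space} set"
  assumes cl: "closed M" and z: "0 \<in> M" and ad: "\<And>a b. a\<in>M \<Longrightarrow> b\<in>M \<Longrightarrow> a+b \<in> M"
    and sc: "\<And>r a. a\<in>M \<Longrightarrow> scaleR r a \<in> M"
  shows "\<exists>m\<in>M. \<forall>v\<in>M. Re (cinner (f - m) v) = 0"
proof -
  define d where "d = (INF m\<in>M. (norm (f - m))^2)"
  have bdd: "bdd_below ((\<lambda>m. (norm (f - m))^2) ` M)"
    by (rule bdd_belowI[of _ 0]) auto
  have ne: "M \<noteq> {}" using z by auto
  have dle: "d \<le> (norm (f - m))^2" if "m \<in> M" for m
    unfolding d_def by (rule cINF_lower[OF bdd that])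
  have ex: "\<exists>m\<in>M. (norm (f - m))^2 < d + 1/(Suc n)" for n :: nat
  proof -
    have "d < d + 1/(Suc n)" by simp
    then show ?thesis unfolding d_def[symmetric] using cINF_less_iff[OF ne bdd] unfolding d_def by blast
  qed
  define s where "s n = (SOME m. m\<in>M \<and> (norm (f - m))^2 < d + 1/(Suc n))" for n :: nat
  have sM: "s n \<in> M" and sd: "(norm (f - s n))^2 < d + 1/(Suc n)" for n
    using someI_ex[OF ex[of n, unfolded Bex_def]] unfolding s_def by auto
  have mid: "(norm (s n - s k))^2 \<le> 2/(Suc n) + 2/(Suc k)" for n k
  proof -
    have "scaleR (1/2) (s n + s k) \<in> M" using sM ad sc by blast
    then have d4: "d \<le> (norm (f - scaleR (1/2) (s n + s k)))^2" by (rule dle)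
    have e1: "(f - s n) + (f - s k) = scaleR 2 (f - scaleR (1/2) (s n + s k))"
      by (simp add: algebra_simps scaleR_2)
    have "(norm ((f - s n) + (f - s k)))^2 = 4 * (norm (f - scaleR (1/2) (s n + s k)))^2"
      unfolding e1 by (simp add: power_mult_distrib)
    moreover have "norm ((f - s n) - (f - s k)) = norm (s n - s k)"
      by (metis minus_diff_eq norm_minus_cancel diff_diff_eq2 add_diff_cancel_left' diff_add_eq_diff_diff_swap)
    then have "(norm ((f - s n) - (f - s k)))^2 = (norm (s n - s k))^2" by simp
    moreover have "2/real (Suc n) = 2 * (1/real (Suc n))" "2/real (Suc k) = 2 * (1/real (Suc k))" by simp_all
    ultimately show ?thesis using parallelogram[of "f - s n" "f - s k"] d4 sd[of n] sd[of k]
      by linarith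
  qed
  have cau: "Cauchy s"
  proof (rule metric_CauchyI)
    fix e :: real assume e: "e > 0"
    obtain N :: nat where N: "4 / e^2 < real N" using reals_Archimedean2 by blast
    have "\<forall>m\<ge>N. \<forall>n\<ge>N. dist (s m) (s n) < e"
    proof (intro allI impI)
      fix m n assume mn: "m \<ge> N" "n \<ge> N"
      have e2: "e^2 > 0" using e by simp
      have "4 < real N * e^2" using N e2 by (simp add: field_simps)
      have "2/(Suc m) \<le> 2/(Suc N)" "2/(Suc n) \<le> 2/(Suc N)" using mn by (auto simp: frac_le)
      moreover have "4/(Suc N) < e^2"
        using \<open>4 < real N * e^2\<close> e2 by (simp add: field_simps) (smt (verit) mult_right_mono e2)
      ultimately have "(norm (s m - s n))^2 < e^2" using mid[of m n] by linarith
      then show "dist (s m) (s n) < e"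
        by (simp add: dist_norm) (meson e less_le power_less_imp_less_base)
    qed
    then show "\<exists>N. \<forall>m\<ge>N. \<forall>n\<ge>N. dist (s m) (s n) < e" by blast
  qed
  then obtain m where lim: "s \<longlonglongrightarrow> m" using Cauchy_convergent_iff convergent_def by blast
  have mM: "m \<in> M" using cl lim sM closed_sequential_limits by blast
  have "(\<lambda>n. (norm (f - s n))^2) \<longlonglongrightarrow> (norm (f - m))^2"
    by (intro tendsto_intros lim)
  moreover have "(\<lambda>n. d + 1/(Suc n)) \<longlonglongrightarrow> d + 0"
    by (intro tendsto_intros LIMSEQ_inverse_real_of_nat[unfolded inverse_eq_divide] ) 
  ultimately have "(norm (f - m))^2 \<le> d"
    using sd by (intro LIMSEQ_le[where X="\<lambda>n. (norm (f - s n))^2" and Y="\<lambda>n. d + 1/(Suc n)"]) (auto intro: less_imp_le)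
  then have fm: "(norm (f - m))^2 = d" using dle[OF mM] by simp
  show ?thesis
  proof (intro bexI[OF _ mM] ballI)
    fix v assume vM: "v \<in> M"
    define p where "p = Re (cinner (f - m) v)"
    show "Re (cinner (f - m) v) = 0"
    proof (cases "v = 0")
      case True then show ?thesis by simp
    next
      case False
      define t where "t = p / (norm v)^2"
      have nv: "(norm v)^2 > 0" using False by simp
      have "m + scaleR t v \<in> M" using ad sc mM vM by blast
      then have "d \<le> (norm ((f - m) - scaleR t v))^2" using dle by (simp add: algebra_simps)
      also have "\<dots> = d - 2 * t * p + t^2 * (norm v)^2"
        by (subst norm_diff_sq) (simp add: fm p_def cinner_scaleR_right power_mult_distrib)
      finally have "2 * t * p \<le> t^2 * (norm v)^2" by simp
      moreover have "2 * t * p = 2 * (p^2 / (norm v)^2)" unfolding t_def by (simp add: power2_eq_square)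
      moreover have "t^2 * (norm v)^2 = p^2 / (norm v)^2" unfolding t_def using nv by (simp add: power2_eq_square)
      ultimately have "p^2 / (norm v)^2 \<le> 0" by linarith
      then have "p^2 \<le> 0" using nv by (simp add: divide_le_0_iff)
      then show ?thesis unfolding p_def[symmetric] by simp
    qed
  qed
qed


lemma cauchy_cmp:
  assumes "Cauchy s" "\<And>m n. dist (g m) (g n) \<le> K * dist (s m) (s n)"
  shows "Cauchy g"
proof (rule metric_CauchyI)
  fix e :: real assume e: "e > 0"
  define e' where "e' = e / (\<bar>K\<bar> + 1)"
  have e': "e' > 0" using e by (simp add: e'_def add_pos_nonneg)
  obtain N where N: "\<forall>m\<ge>N. \<forall>n\<ge>N. dist (s m) (s n) < e'" using metric_CauchyD[OF assms(1) e'] by blast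
  have "\<forall>m\<ge>N. \<forall>n\<ge>N. dist (g m) (g n) < e"
  proof (intro allI impI)
    fix m n assume "m \<ge> N" "n \<ge> N"
    then have d: "dist (s m) (s n) < e'" using N by blast
    have "dist (g m) (g n) \<le> K * dist (s m) (s n)" by (rule assms(2))
    also have "\<dots> \<le> (\<bar>K\<bar> + 1) * dist (s m) (s n)"
      by (intro mult_right_mono) auto
    also have "\<dots> < (\<bar>K\<bar> + 1) * e'"
      using d by (intro mult_strict_left_mono) auto
    also have "\<dots> = e" unfolding e'_def by (simp add: add_pos_nonneg)
    finally show "dist (g m) (g n) < e" .
  qed
  then show "\<exists>N. \<forall>m\<ge>N. \<forall>n\<ge>N. dist (g m) (g n) < e" by blast
qed

locale fp =
  fixes T0 Tt0 :: "('a::{complex_inner,complete_space} \<times> 'a) set" and c mu :: real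
  assumes lin0: "is_linop T0" and lint: "is_linop Tt0"
   and dense: "closure (Domain T0) = UNIV"
   and domeq: "Domain Tt0 = Domain T0"
   and symm: "\<And>x y a b. (x,a)\<in>T0 \<Longrightarrow> (y,b)\<in>Tt0 \<Longrightarrow> cinner a y = cinner x b"
   and cpos: "c > 0" and bnd: "\<And>x a b. (x,a)\<in>T0 \<Longrightarrow> (x,b)\<in>Tt0 \<Longrightarrow> norm (a + b) \<le> c * norm x"
   and mupos: "mu > 0"
   and pos: "\<And>x a b. (x,a)\<in>T0 \<Longrightarrow> (x,b)\<in>Tt0 \<Longrightarrow> 2*mu*(norm x)^2 \<le> Re (cinner (a + b) x)"
   and cl0: "closed T0" and clt: "closed Tt0"
begin

definition "W0 = Domain T0"
definition "t0 = op_apply T0"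
definition "tt0 = op_apply Tt0"
definition "S x = t0 x + tt0 x"
definition "T1 = op_adjoint Tt0"
definition "Tt1 = op_adjoint T0"
definition "C y = (SOME z. \<forall>x\<in>W0. cinner (S x) y = cinner x z)"

lemma t0_in: "x \<in> W0 \<Longrightarrow> (x, t0 x) \<in> T0"
  unfolding W0_def t0_def by (rule op_apply_in[OF lin0])
lemma tt0_in: "x \<in> W0 \<Longrightarrow> (x, tt0 x) \<in> Tt0"
  unfolding W0_def tt0_def using domeq by (intro op_apply_in[OF lint]) auto
lemma t0_eq: "(x,a) \<in> T0 \<Longrightarrow> t0 x = a"
  unfolding t0_def by (rule op_apply_eq[OF lin0])
lemma tt0_eq: "(x,a) \<in> Tt0 \<Longrightarrow> tt0 x = a"
  unfolding tt0_def by (rule op_apply_eq[OF lint])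
lemma W0_T0: "(x,a) \<in> T0 \<Longrightarrow> x \<in> W0"
  unfolding W0_def by auto
lemma W0_Tt0: "(x,a) \<in> Tt0 \<Longrightarrow> x \<in> W0"
  unfolding W0_def using domeq by auto

lemma W0_diff: "x \<in> W0 \<Longrightarrow> y \<in> W0 \<Longrightarrow> x - y \<in> W0 \<and> t0 (x - y) = t0 x - t0 y \<and> tt0 (x - y) = tt0 x - tt0 y"
  using linop_diff[OF lin0 t0_in t0_in] linop_diff[OF lint tt0_in tt0_in]
  by (auto intro: W0_T0 t0_eq tt0_eq)
lemma W0_add: "x \<in> W0 \<Longrightarrow> y \<in> W0 \<Longrightarrow> x + y \<in> W0 \<and> t0 (x + y) = t0 x + t0 y \<and> tt0 (x + y) = tt0 x + tt0 y"
  using linop_add[OF lin0 t0_in t0_in] linop_add[OF lint tt0_in tt0_in]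
  by (auto intro: W0_T0 t0_eq tt0_eq)
lemma W0_scaleC: "x \<in> W0 \<Longrightarrow> scaleC r x \<in> W0 \<and> t0 (scaleC r x) = scaleC r (t0 x) \<and> tt0 (scaleC r x) = scaleC r (tt0 x)"
  using linop_scaleC[OF lin0 t0_in] linop_scaleC[OF lint tt0_in]
  by (auto intro: W0_T0 t0_eq tt0_eq)
lemma W0_scaleR: "x \<in> W0 \<Longrightarrow> scaleR r x \<in> W0 \<and> t0 (scaleR r x) = scaleR r (t0 x) \<and> tt0 (scaleR r x) = scaleR r (tt0 x)"
  using W0_scaleC[of x "complex_of_real r"] by (simp add: scaleC_scaleR)
lemma W0_zero: "0 \<in> W0 \<and> t0 0 = 0 \<and> tt0 0 = 0"
  using linop_zero[OF lin0] linop_zero[OF lint] by (auto intro: W0_T0 t0_eq tt0_eq)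

lemma S_diff: "x \<in> W0 \<Longrightarrow> y \<in> W0 \<Longrightarrow> S (x - y) = S x - S y"
  unfolding S_def using W0_diff by (simp add: algebra_simps)

lemma S_sym: "x \<in> W0 \<Longrightarrow> y \<in> W0 \<Longrightarrow> cinner (S x) y = cinner x (S y)"
proof -
  assume x: "x \<in> W0" and y: "y \<in> W0"
  have 1: "cinner (t0 x) y = cinner x (tt0 y)" by (rule symm[OF t0_in[OF x] tt0_in[OF y]])
  have "cinner (t0 y) x = cinner y (tt0 x)" by (rule symm[OF t0_in[OF y] tt0_in[OF x]])
  then have 2: "cinner (tt0 x) y = cinner x (t0 y)"
    using cinner_commute[of "tt0 x" y] cinner_commute[of x "t0 y"] by simp
  show ?thesis unfolding S_def by (simp add: cinner_add_left cinner_add_right 1 2)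
qed

lemma S_bnd: "x \<in> W0 \<Longrightarrow> norm (S x) \<le> c * norm x"
  unfolding S_def by (rule bnd[OF t0_in tt0_in])

lemma S_pos: "x \<in> W0 \<Longrightarrow> 2*mu*(norm x)^2 \<le> Re (cinner (S x) x)"
  unfolding S_def by (rule pos[OF t0_in tt0_in])

lemma seq_W0: "\<exists>s. (\<forall>n. s n \<in> W0) \<and> s \<longlonglongrightarrow> y"
  using dense closure_sequential[of y "Domain T0"] unfolding W0_def by auto

lemma S_lim:
  assumes sW: "\<And>n. s n \<in> W0" and lim: "s \<longlonglongrightarrow> y"
  shows "\<exists>z. (\<lambda>n. S (s n)) \<longlonglongrightarrow> z \<and> (\<forall>x\<in>W0. cinner (S x) y = cinner x z)"
proof -
  have "Cauchy (\<lambda>n. S (s n))"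
  proof (rule cauchy_cmp[where K=c])
    show "Cauchy s" using lim by (rule LIMSEQ_imp_Cauchy)
    fix m n
    show "dist (S (s m)) (S (s n)) \<le> c * dist (s m) (s n)"
      unfolding dist_norm using S_diff[OF sW sW, of m n] S_bnd[OF W0_diff[OF sW sW, of m n, THEN conjunct1]]
      by simp
  qed
  then obtain z where z: "(\<lambda>n. S (s n)) \<longlonglongrightarrow> z" using Cauchy_convergent_iff convergent_def by blast
  have "cinner (S x) y = cinner x z" if x: "x \<in> W0" for x
  proof -
    have "(\<lambda>n. cinner (S x) (s n)) \<longlonglongrightarrow> cinner (S x) y" by (intro tendsto_cinner tendsto_const lim)
    moreover have "(\<lambda>n. cinner (S x) (s n)) = (\<lambda>n. cinner x (S (s n)))"
      using S_sym[OF x sW] by auto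
    ultimately have l1: "(\<lambda>n. cinner x (S (s n))) \<longlonglongrightarrow> cinner (S x) y" by simp
    have "(\<lambda>n. cinner x (S (s n))) \<longlonglongrightarrow> cinner x z" by (intro tendsto_cinner tendsto_const z)
    from LIMSEQ_unique[OF l1 this] show ?thesis .
  qed
  then show ?thesis using z by blast
qed

lemma C_prop: "x \<in> W0 \<Longrightarrow> cinner (S x) y = cinner x (C y)"
proof -
  obtain s where "\<forall>n. s n \<in> W0" "s \<longlonglongrightarrow> y" using seq_W0 by blast
  then have "\<exists>z. \<forall>x\<in>W0. cinner (S x) y = cinner x z" using S_lim by blast
  from someI_ex[OF this] show "x \<in> W0 \<Longrightarrow> cinner (S x) y = cinner x (C y)" unfolding C_def by blast
qed

lemma C_unique: assumes "\<And>x. x\<in>W0 \<Longrightarrow> cinner (S x) y = cinner x z" shows "z = C y"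
proof -
  have "z - C y = 0"
  proof (rule dense_orth[OF dense[folded W0_def]])
    fix w assume w: "w \<in> W0"
    have "cinner w z = cinner (S w) y" using assms[OF w] by simp
    also have "\<dots> = cinner w (C y)" by (rule C_prop[OF w])
    finally show "cinner w (z - C y) = 0" by (simp add: cinner_diff_right)
  qed
  then show ?thesis by simp
qed

lemma C_lim: assumes "\<And>n. s n \<in> W0" "s \<longlonglongrightarrow> y" shows "(\<lambda>n. S (s n)) \<longlonglongrightarrow> C y"
proof -
  obtain z where z: "(\<lambda>n. S (s n)) \<longlonglongrightarrow> z" "\<forall>x\<in>W0. cinner (S x) y = cinner x z"
    using S_lim[OF assms] by blast
  have "z = C y" using z(2) by (intro C_unique) blast
  then show ?thesis using z(1) by simp
qed

lemma C_W0: "x \<in> W0 \<Longrightarrow> C x = S x"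
  by (rule C_unique[symmetric]) (rule S_sym)

lemma C_sym: "cinner (C x) y = cinner x (C y)"
proof -
  obtain s where sW: "\<And>n. s n \<in> W0" and lim: "s \<longlonglongrightarrow> x" using seq_W0 by blast
  have "(\<lambda>n. cinner (S (s n)) y) \<longlonglongrightarrow> cinner (C x) y"
    by (intro tendsto_cinner tendsto_const C_lim[OF sW lim])
  moreover have "(\<lambda>n. cinner (S (s n)) y) = (\<lambda>n. cinner (s n) (C y))" using C_prop[OF sW] by auto
  ultimately have l1: "(\<lambda>n. cinner (s n) (C y)) \<longlonglongrightarrow> cinner (C x) y" by simp
  have "(\<lambda>n. cinner (s n) (C y)) \<longlonglongrightarrow> cinner x (C y)" by (intro tendsto_cinner tendsto_const lim)
  from LIMSEQ_unique[OF l1 this] show ?thesis .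
qed

lemma C_pos: "2*mu*(norm x)^2 \<le> Re (cinner (C x) x)"
proof -
  obtain s where sW: "\<And>n. s n \<in> W0" and lim: "s \<longlonglongrightarrow> x" using seq_W0 by blast
  have "(\<lambda>n. Re (cinner (S (s n)) (s n))) \<longlonglongrightarrow> Re (cinner (C x) x)"
    by (intro tendsto_Re tendsto_cinner C_lim[OF sW lim] lim)
  moreover have "(\<lambda>n. 2*mu*(norm (s n))^2) \<longlonglongrightarrow> 2*mu*(norm x)^2"
    by (intro tendsto_intros lim)
  ultimately show ?thesis using S_pos[OF sW]
    by (intro LIMSEQ_le[where X="\<lambda>n. 2*mu*(norm (s n))^2" and Y="\<lambda>n. Re (cinner (S (s n)) (s n))"]) auto
qed

lemma C_diff: "C (x - y) = C x - C y"
  by (rule C_unique[symmetric]) (simp add: cinner_diff_right C_prop)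
lemma C_add: "C (x + y) = C x + C y"
  by (rule C_unique[symmetric]) (simp add: cinner_add_right C_prop)
lemma C_scaleR: "C (scaleR r x) = scaleR r (C x)"
  by (rule C_unique[symmetric]) (simp add: cinner_scaleR_right C_prop)
lemma C_zero: "C 0 = 0"
  using C_diff[of 0 0] by simp

lemma C_bnd: "norm (C y) \<le> c * norm y"
proof -
  obtain s where sW: "\<And>n. s n \<in> W0" and lim: "s \<longlonglongrightarrow> y" using seq_W0 by blast
  have "(\<lambda>n. norm (S (s n))) \<longlonglongrightarrow> norm (C y)" by (intro tendsto_norm C_lim[OF sW lim])
  moreover have "(\<lambda>n. c * norm (s n)) \<longlonglongrightarrow> c * norm y" by (intro tendsto_intros lim)
  ultimately show ?thesis using S_bnd[OF sW]
    by (intro LIMSEQ_le[where X="\<lambda>n. norm (S (s n))" and Y="\<lambda>n. c * norm (s n)"]) auto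
qed

lemma C_cont: assumes "s \<longlonglongrightarrow> y" shows "(\<lambda>n. C (s n)) \<longlonglongrightarrow> C y"
proof -
  have "(\<lambda>n. s n - y) \<longlonglongrightarrow> 0" using assms by (rule LIM_zero)
  then have "(\<lambda>n. norm (s n - y)) \<longlonglongrightarrow> 0" by (rule tendsto_norm_zero)
  then have g: "(\<lambda>n. c * norm (s n - y)) \<longlonglongrightarrow> 0" by (rule tendsto_mult_right_zero)
  have "\<forall>n. norm (C (s n) - C y) \<le> c * norm (s n - y)"
    using C_bnd by (simp add: C_diff[symmetric])
  then have "(\<lambda>n. C (s n) - C y) \<longlonglongrightarrow> 0"
    by (intro Lim_null_comparison[OF _ g] always_eventually)
  then show ?thesis by (rule LIM_zero_cancel)
qed

end


context fp begin

lemma T0_T1: "(x,a) \<in> T0 \<Longrightarrow> (x,a) \<in> T1"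
  unfolding T1_def adj_iff
proof (intro allI impI)
  fix x' w assume "(x,a) \<in> T0" "(x',w) \<in> Tt0"
  then have "cinner a x' = cinner x w" by (rule symm)
  then show "cinner w x = cinner x' a"
    using cinner_commute[of w x] cinner_commute[of x' a] by simp
qed

lemma Tt0_Tt1: "(x,b) \<in> Tt0 \<Longrightarrow> (x,b) \<in> Tt1"
  unfolding Tt1_def adj_iff using symm by blast

lemma Tt1_T1: assumes "(y,b) \<in> Tt1" shows "(y, C y - b) \<in> T1"
  unfolding T1_def adj_iff
proof (intro allI impI)
  fix x w assume xw: "(x,w) \<in> Tt0"
  then have x: "x \<in> W0" and w: "w = tt0 x" using W0_Tt0 tt0_eq by auto
  have "cinner (t0 x) y = cinner x b" using assms t0_in[OF x] unfolding Tt1_def adj_iff by blast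
  moreover have "cinner (S x) y = cinner x (C y)" by (rule C_prop[OF x])
  ultimately show "cinner w y = cinner x (C y - b)"
    unfolding w S_def by (simp add: cinner_add_left cinner_diff_right eq_diff_eq add.commute)
qed

lemma T1_Tt1: assumes "(y,b) \<in> T1" shows "(y, C y - b) \<in> Tt1"
  unfolding Tt1_def adj_iff
proof (intro allI impI)
  fix x w assume xw: "(x,w) \<in> T0"
  then have x: "x \<in> W0" and w: "w = t0 x" using W0_T0 t0_eq by auto
  have "cinner (tt0 x) y = cinner x b" using assms tt0_in[OF x] unfolding T1_def adj_iff by blast
  moreover have "cinner (S x) y = cinner x (C y)" by (rule C_prop[OF x])
  ultimately show "cinner w y = cinner x (C y - b)"
    unfolding w S_def by (simp add: cinner_add_left cinner_diff_right eq_diff_eq add.commute)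
qed

lemma denseT: "closure (Domain Tt0) = UNIV"
  using dense domeq by simp

lemma T1_fun: "(y,a) \<in> T1 \<Longrightarrow> (y,b) \<in> T1 \<Longrightarrow> a = b"
  unfolding T1_def by (rule adj_fun[OF denseT])

lemma Tt1_fun: "(y,a) \<in> Tt1 \<Longrightarrow> (y,b) \<in> Tt1 \<Longrightarrow> a = b"
  unfolding Tt1_def by (rule adj_fun[OF dense])

lemma kTt1: "(k,0) \<in> Tt1 \<Longrightarrow> (k, C k) \<in> T1"
  using Tt1_T1 by fastforce

lemma kT1: "(k,0) \<in> T1 \<Longrightarrow> (k, C k) \<in> Tt1"
  using T1_Tt1 by fastforce

lemma orth1: "(w,a) \<in> T0 \<Longrightarrow> (k,0) \<in> Tt1 \<Longrightarrow> cinner a k = 0"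
  unfolding Tt1_def adj_iff by fastforce

lemma orth2: "(w,b) \<in> Tt0 \<Longrightarrow> (k,0) \<in> T1 \<Longrightarrow> cinner b k = 0"
  unfolding T1_def adj_iff by fastforce

lemma A_mem: assumes "w \<in> W0" "(k,0) \<in> Tt1" shows "(w + k, t0 w + C k) \<in> T1"
proof -
  have "(w, t0 w) \<in> op_adjoint Tt0" using T0_T1[OF t0_in[OF assms(1)]] unfolding T1_def .
  moreover have "(k, C k) \<in> op_adjoint Tt0" using kTt1[OF assms(2)] unfolding T1_def .
  ultimately show ?thesis unfolding T1_def by (rule adj_add)
qed

lemma B_mem: assumes "w \<in> W0" "(k,0) \<in> T1" shows "(w + k, tt0 w + C k) \<in> Tt1"
proof -
  have "(w, tt0 w) \<in> op_adjoint T0" using Tt0_Tt1[OF tt0_in[OF assms(1)]] unfolding Tt1_def .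
  moreover have "(k, C k) \<in> op_adjoint T0" using kT1[OF assms(2)] unfolding Tt1_def .
  ultimately show ?thesis unfolding Tt1_def by (rule adj_add)
qed

lemma A_char: "op_restrict T1 (set_plus_vec W0 (op_ker Tt1)) = {(w + k, t0 w + C k) | w k. w \<in> W0 \<and> (k,0) \<in> Tt1}"
proof (intro equalityI subsetI)
  fix p assume "p \<in> op_restrict T1 (set_plus_vec W0 (op_ker Tt1))"
  then obtain u a w k where p: "p = (u,a)" "(u,a) \<in> T1" "u = w + k" "w \<in> W0" "(k,0) \<in> Tt1"
    unfolding op_restrict_def set_plus_vec_def op_ker_def by blast
  then have "a = t0 w + C k" using T1_fun A_mem by blast
  then show "p \<in> {(w + k, t0 w + C k) | w k. w \<in> W0 \<and> (k,0) \<in> Tt1}" using p by blast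
next
  fix p assume "p \<in> {(w + k, t0 w + C k) | w k. w \<in> W0 \<and> (k,0) \<in> Tt1}"
  then obtain w k where p: "p = (w + k, t0 w + C k)" "w \<in> W0" "(k,0) \<in> Tt1" by blast
  then show "p \<in> op_restrict T1 (set_plus_vec W0 (op_ker Tt1))"
    using A_mem unfolding op_restrict_def set_plus_vec_def op_ker_def by blast
qed

lemma B_char: "op_restrict Tt1 (set_plus_vec W0 (op_ker T1)) = {(w + k, tt0 w + C k) | w k. w \<in> W0 \<and> (k,0) \<in> T1}"
proof (intro equalityI subsetI)
  fix p assume "p \<in> op_restrict Tt1 (set_plus_vec W0 (op_ker T1))"
  then obtain u a w k where p: "p = (u,a)" "(u,a) \<in> Tt1" "u = w + k" "w \<in> W0" "(k,0) \<in> T1"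
    unfolding op_restrict_def set_plus_vec_def op_ker_def by blast
  then have "a = tt0 w + C k" using Tt1_fun B_mem by blast
  then show "p \<in> {(w + k, tt0 w + C k) | w k. w \<in> W0 \<and> (k,0) \<in> T1}" using p by blast
next
  fix p assume "p \<in> {(w + k, tt0 w + C k) | w k. w \<in> W0 \<and> (k,0) \<in> T1}"
  then obtain w k where p: "p = (w + k, tt0 w + C k)" "w \<in> W0" "(k,0) \<in> T1" by blast
  then show "p \<in> op_restrict Tt1 (set_plus_vec W0 (op_ker T1))"
    using B_mem unfolding op_restrict_def set_plus_vec_def op_ker_def by blast
qed

lemma coer: assumes w: "w \<in> W0" and k: "(k,0) \<in> Tt1"
  shows "mu*((norm (w+k))^2 + (norm k)^2) \<le> Re (cinner (t0 w + C k) (w+k))"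
proof -
  define a where "a = t0 w"
  define b where "b = tt0 w"
  have h1: "cinner a k = 0" unfolding a_def by (rule orth1[OF t0_in[OF w] k])
  have h2: "Re (cinner k a) = 0" using h1 cinner_commute[of k a] by simp
  have "cinner a w = cinner w b" unfolding a_def b_def by (rule symm[OF t0_in[OF w] tt0_in[OF w]])
  then have h3: "Re (cinner b w) = Re (cinner a w)" using cinner_commute[of b w] by simp
  have h4: "Re (cinner b k) = Re (cinner k b)" using cinner_commute[of b k] by simp
  have Cw: "C w = a + b" unfolding a_def b_def using C_W0[OF w] S_def by simp
  have h5: "cinner (C k) w = cinner k a + cinner k b" unfolding C_sym Cw by (simp add: cinner_add_right)
  have E1: "Re (cinner (a + C k) (w + k)) = Re (cinner a w) + Re (cinner k b) + Re (cinner (C k) k)"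
    by (simp add: cinner_add_left cinner_add_right h1 h2 h5)
  have E2: "Re (cinner (C (w + k)) (w + k)) = 2 * Re (cinner a w) + 2 * Re (cinner k b) + Re (cinner (C k) k)"
    unfolding C_add Cw by (simp add: cinner_add_left cinner_add_right h1 h2 h3 h4 h5)
  have "2*mu*(norm (w+k))^2 \<le> Re (cinner (C (w + k)) (w + k))" by (rule C_pos)
  moreover have "2*mu*(norm k)^2 \<le> Re (cinner (C k) k)" by (rule C_pos)
  ultimately show ?thesis unfolding a_def[symmetric] using E1 E2 by (simp add: algebra_simps)
qed

lemma coer2: assumes w: "w \<in> W0" and k: "(k,0) \<in> Tt1"
  shows "mu * norm (w+k) \<le> norm (t0 w + C k) \<and> mu * norm k \<le> norm (t0 w + C k)"
proof -
  define X where "X = norm (w+k)"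
  define Y where "Y = norm k"
  define F where "F = norm (t0 w + C k)"
  have "Re (cinner (t0 w + C k) (w+k)) \<le> F * X"
    unfolding F_def X_def using complex_Re_le_cmod cauchy_schwarz order_trans by blast
  then have main: "mu * (X^2 + Y^2) \<le> F * X" using coer[OF w k] unfolding X_def Y_def by linarith
  have X0: "X \<ge> 0" "Y \<ge> 0" "F \<ge> 0" unfolding X_def Y_def F_def by auto
  have "mu * X^2 \<le> F * X" using main mupos X0 by (smt (verit) mult_nonneg_nonneg zero_le_power2 distrib_left)
  then have 1: "mu * X \<le> F"
  proof (cases "X = 0")
    case True then show ?thesis using X0 by simp
  next
    case False
    then have "X > 0" using X0 by simp
    moreover have "(mu * X) * X \<le> F * X" using \<open>mu * X^2 \<le> F * X\<close> by (simp add: power2_eq_square algebra_simps)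
    ultimately show ?thesis by simp
  qed
  have "mu * Y^2 \<le> F * X" using main mupos X0 by (smt (verit) mult_nonneg_nonneg zero_le_power2 distrib_left)
  then have "mu * (mu * Y^2) \<le> mu * (F * X)" using mupos by simp
  also have "\<dots> = F * (mu * X)" by simp
  also have "\<dots> \<le> F * F" using 1 X0 by (intro mult_left_mono) auto
  finally have "(mu * Y)^2 \<le> F^2" by (simp add: power2_eq_square algebra_simps)
  then have "mu * Y \<le> F" using X0(3) by (rule power2_le_imp_le)
  then show ?thesis using 1 unfolding X_def Y_def F_def by simp
qed

lemma L1: "op_restrict T1 (set_plus_vec W0 (op_ker Tt1)) \<subseteq> op_adjoint (op_restrict Tt1 (set_plus_vec W0 (op_ker T1)))"
  unfolding A_char B_char
proof (intro subsetI)
  fix p assume "p \<in> {(w + k, t0 w + C k) | w k. w \<in> W0 \<and> (k,0) \<in> Tt1}"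
  then obtain w k where p: "p = (w + k, t0 w + C k)" and w: "w \<in> W0" and k: "(k,0) \<in> Tt1" by blast
  show "p \<in> op_adjoint {(w + k, tt0 w + C k) | w k. w \<in> W0 \<and> (k,0) \<in> T1}"
    unfolding p adj_iff
  proof (intro allI impI)
    fix v z assume "(v, z) \<in> {(w + k, tt0 w + C k) | w k. w \<in> W0 \<and> (k,0) \<in> T1}"
    then obtain w' k' where vz: "v = w' + k'" "z = tt0 w' + C k'" and w': "w' \<in> W0" and k': "(k',0) \<in> T1" by blast
    define a where "a = t0 w"
    define b where "b = tt0 w"
    define a' where "a' = t0 w'"
    define b' where "b' = tt0 w'"
    have "cinner a w' = cinner w b'" unfolding a_def b'_def by (rule symm[OF t0_in[OF w] tt0_in[OF w']])
    then have f1: "cinner b' w = cinner w' a" using cinner_commute[of b' w] cinner_commute[of w' a] by simp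
    have f2: "cinner (C k') k = cinner k' (C k)" by (rule C_sym)
    have Cw: "C w = a + b" unfolding a_def b_def using C_W0[OF w] S_def by simp
    have Cw': "C w' = a' + b'" unfolding a'_def b'_def using C_W0[OF w'] S_def by simp
    have o1: "cinner a' k = 0" unfolding a'_def by (rule orth1[OF t0_in[OF w'] k])
    have o2: "cinner b k' = 0" unfolding b_def by (rule orth2[OF tt0_in[OF w] k'])
    have "cinner (C k) w' = cinner k (a' + b')" unfolding C_sym Cw' ..
    then have f3: "cinner b' k = cinner w' (C k)"
      using cinner_commute[of "C k" w'] cinner_commute[of k "a' + b'"] o1 by (simp add: cinner_add_left)
    have f4: "cinner (C k') w = cinner k' a"
      unfolding C_sym Cw using cinner_commute[of k' b] o2 by (simp add: cinner_add_right)
    show "cinner z (w + k) = cinner v (t0 w + C k)"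
      unfolding vz a_def[symmetric] b'_def[symmetric]
      by (simp add: cinner_add_left cinner_add_right f1 f2 f3 f4)
  qed
qed

end


context fp begin

lemma ker_add: "(k,0) \<in> Tt1 \<Longrightarrow> (k',0) \<in> Tt1 \<Longrightarrow> (k + k',0) \<in> Tt1"
  unfolding Tt1_def using adj_add by fastforce
lemma ker_diff: "(k,0) \<in> Tt1 \<Longrightarrow> (k',0) \<in> Tt1 \<Longrightarrow> (k - k',0) \<in> Tt1"
  unfolding Tt1_def using adj_diff by fastforce
lemma ker_scaleR: "(k,0) \<in> Tt1 \<Longrightarrow> (scaleR r k,0) \<in> Tt1"
  unfolding Tt1_def using adj_scaleR by fastforce
lemma ker_zero: "(0,0) \<in> Tt1"
  unfolding Tt1_def by (rule adj_zero)

lemma L2: assumes "(y,0) \<in> op_adjoint (op_restrict T1 (set_plus_vec W0 (op_ker Tt1)))" shows "y = 0"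
proof -
  have ad: "cinner a y = 0" if "(x,a) \<in> {(w + k, t0 w + C k) | w k. w \<in> W0 \<and> (k,0) \<in> Tt1}" for x a
    using assms that unfolding A_char adj_iff by fastforce
  have "(y,0) \<in> Tt1" unfolding Tt1_def adj_iff
  proof (intro allI impI)
    fix x a assume xa: "(x,a) \<in> T0"
    then have x: "x \<in> W0" and a: "a = t0 x" using W0_T0 t0_eq by auto
    have "(x + 0, t0 x + C 0) \<in> {(w + k, t0 w + C k) | w k. w \<in> W0 \<and> (k,0) \<in> Tt1}"
      using x ker_zero by blast
    then have "cinner (t0 x + C 0) y = 0" by (rule ad)
    then show "cinner a y = cinner x 0" using a by (simp add: C_zero)
  qed
  then have "(0 + y, t0 0 + C y) \<in> {(w + k, t0 w + C k) | w k. w \<in> W0 \<and> (k,0) \<in> Tt1}"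
    using W0_zero by blast
  then have "cinner (t0 0 + C y) y = 0" by (rule ad)
  then have "cinner (C y) y = 0" using W0_zero by simp
  then have "2*mu*(norm y)^2 \<le> 0" using C_pos[of y] by simp
  then show "y = 0" using mupos by (simp add: mult_le_0_iff)
qed

definition "R = {t0 w + C k | w k. w \<in> W0 \<and> (k,0) \<in> Tt1}"

lemma R_closed: "closed R"
  unfolding closed_sequential_limits
proof (intro allI impI, elim conjE)
  fix fs l assume fR: "\<forall>n. fs n \<in> R" and fl: "fs \<longlonglongrightarrow> l"
  have "\<forall>n. \<exists>p. fst p \<in> W0 \<and> (snd p, 0) \<in> Tt1 \<and> fs n = t0 (fst p) + C (snd p)"
    using fR unfolding R_def by force
  from choice[OF this] obtain p where p: "\<And>n. fst (p n) \<in> W0 \<and> (snd (p n), 0) \<in> Tt1 \<and> fs n = t0 (fst (p n)) + C (snd (p n))"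
    by blast
  define w where "w n = fst (p n)" for n
  define k where "k n = snd (p n)" for n
  have w: "\<And>n. w n \<in> W0" and k: "\<And>n. (k n, 0) \<in> Tt1" and fs: "\<And>n. fs n = t0 (w n) + C (k n)"
    using p unfolding w_def k_def by auto
  define u where "u n = w n + k n" for n
  have est: "mu * dist (u m) (u n) \<le> dist (fs m) (fs n) \<and> mu * dist (k m) (k n) \<le> dist (fs m) (fs n)" for m n
  proof -
    have wd: "w m - w n \<in> W0" and t0d: "t0 (w m - w n) = t0 (w m) - t0 (w n)" using W0_diff[OF w w] by auto
    have kd: "(k m - k n, 0) \<in> Tt1" using ker_diff[OF k k] .
    have "t0 (w m - w n) + C (k m - k n) = fs m - fs n" unfolding t0d C_diff fs by simp
    moreover have "(w m - w n) + (k m - k n) = u m - u n" unfolding u_def by simp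
    ultimately show ?thesis using coer2[OF wd kd] by (simp add: dist_norm)
  qed
  have cf: "Cauchy fs" using fl by (rule LIMSEQ_imp_Cauchy)
  have "Cauchy u"
    by (rule cauchy_cmp[OF cf, where K="1/mu"]) (use est mupos in \<open>simp add: field_simps\<close>)
  then obtain U where U: "u \<longlonglongrightarrow> U" using Cauchy_convergent_iff convergent_def by blast
  have "Cauchy k"
    by (rule cauchy_cmp[OF cf, where K="1/mu"]) (use est mupos in \<open>simp add: field_simps\<close>)
  then obtain K where K: "k \<longlonglongrightarrow> K" using Cauchy_convergent_iff convergent_def by blast
  have KT: "(K, 0) \<in> Tt1"
  proof -
    have cl: "closed Tt1" unfolding Tt1_def by (rule adj_closed)
    have lim: "(\<lambda>n. (k n, 0)) \<longlonglongrightarrow> (K, 0)" by (intro tendsto_Pair K tendsto_const)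
    show ?thesis by (rule closed_sequentially[OF cl k lim])
  qed
  have "(\<lambda>n. (w n, t0 (w n))) \<longlonglongrightarrow> (U - K, l - C K)"
  proof (intro tendsto_Pair)
    have "(\<lambda>n. u n - k n) \<longlonglongrightarrow> U - K" by (intro tendsto_diff U K)
    then show "(\<lambda>n. w n) \<longlonglongrightarrow> U - K" unfolding u_def by simp
    have "(\<lambda>n. fs n - C (k n)) \<longlonglongrightarrow> l - C K" by (intro tendsto_diff fl C_cont K)
    then show "(\<lambda>n. t0 (w n)) \<longlonglongrightarrow> l - C K" unfolding fs by simp
  qed
  then have "(U - K, l - C K) \<in> T0" by (rule closed_sequentially[OF cl0 t0_in[OF w]])
  then have "U - K \<in> W0" "t0 (U - K) = l - C K" using W0_T0 t0_eq by auto
  then show "l \<in> R" unfolding R_def using KT by force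
qed

lemma R_sub: "0 \<in> R" "a \<in> R \<Longrightarrow> b \<in> R \<Longrightarrow> a + b \<in> R" "a \<in> R \<Longrightarrow> scaleR r a \<in> R"
proof -
  show "0 \<in> R" unfolding R_def using W0_zero ker_zero C_zero by force
next
  assume "a \<in> R" "b \<in> R"
  then obtain w k w' k' where "a = t0 w + C k" "w \<in> W0" "(k,0) \<in> Tt1" "b = t0 w' + C k'" "w' \<in> W0" "(k',0) \<in> Tt1"
    unfolding R_def by blast
  then show "a + b \<in> R" unfolding R_def using W0_add ker_add C_add
    by (intro CollectI exI[of _ "w + w'"] exI[of _ "k + k'"]) (simp add: algebra_simps)
next
  assume "a \<in> R"
  then obtain w k where "a = t0 w + C k" "w \<in> W0" "(k,0) \<in> Tt1" unfolding R_def by blast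
  then show "scaleR r a \<in> R" unfolding R_def using W0_scaleR ker_scaleR C_scaleR
    by (intro CollectI exI[of _ "scaleR r w"] exI[of _ "scaleR r k"]) (simp add: scaleR_add_right)
qed

lemma L3: "\<exists>u. (u,f) \<in> op_restrict T1 (set_plus_vec W0 (op_ker Tt1))"
proof -
  obtain m where mR: "m \<in> R" and orth: "\<And>v. v \<in> R \<Longrightarrow> Re (cinner (f - m) v) = 0"
    using projection[OF R_closed R_sub] by blast
  define g where "g = f - m"
  have "(g,0) \<in> Tt1" unfolding Tt1_def adj_iff
  proof (intro allI impI)
    fix x a assume xa: "(x,a) \<in> T0"
    then have x: "x \<in> W0" and a: "a = t0 x" using W0_T0 t0_eq by auto
    have inR: "t0 v \<in> R" if "v \<in> W0" for v
      unfolding R_def using that ker_zero C_zero by force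
    have "Re (cinner g (t0 x)) = 0" using orth[OF inR[OF x]] unfolding g_def .
    moreover have "Re (cinner g (t0 (scaleC \<i> x))) = 0" using orth[OF inR] W0_scaleC[OF x] unfolding g_def by blast
    then have "Im (cinner g (t0 x)) = 0" using W0_scaleC[OF x] by (simp add: cinner_scaleC_right)
    ultimately have "cinner g (t0 x) = 0" by (simp add: complex_eq_iff)
    then show "cinner a g = cinner x 0" using a cinner_commute[of "t0 x" g] by simp
  qed
  then have "C g \<in> R" unfolding R_def using W0_zero by force
  then have "Re (cinner g (C g)) = 0" using orth unfolding g_def by blast
  then have "Re (cinner (C g) g) = 0" using cinner_commute[of "C g" g] by simp
  then have "2*mu*(norm g)^2 \<le> 0" using C_pos[of g] by simp
  then have "g = 0" using mupos by (simp add: mult_le_0_iff)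
  then have "f \<in> R" using mR unfolding g_def by simp
  then show ?thesis unfolding A_char R_def by blast
qed

lemma A_apply: "(x,a) \<in> op_restrict T1 (set_plus_vec W0 (op_ker Tt1)) \<Longrightarrow> op_apply (op_restrict T1 (set_plus_vec W0 (op_ker Tt1))) x = a"
  unfolding op_apply_def by (rule the_equality) (auto simp: op_restrict_def dest: T1_fun)

lemma bij: "bij_betw (op_apply (op_restrict T1 (set_plus_vec W0 (op_ker Tt1)))) (op_dom (op_restrict T1 (set_plus_vec W0 (op_ker Tt1)))) UNIV"
  unfolding bij_betw_def
proof
  let ?A = "op_restrict T1 (set_plus_vec W0 (op_ker Tt1))"
  show "inj_on (op_apply ?A) (op_dom ?A)"
  proof (rule inj_onI)
    fix x y assume "x \<in> op_dom ?A" "y \<in> op_dom ?A" and eq: "op_apply ?A x = op_apply ?A y"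
    then obtain a b where xa: "(x,a) \<in> ?A" and yb: "(y,b) \<in> ?A" unfolding op_dom_def by blast
    then have ab: "a = b" using eq A_apply by metis
    obtain w1 k1 where 1: "x = w1 + k1" "a = t0 w1 + C k1" "w1 \<in> W0" "(k1,0) \<in> Tt1"
      using xa unfolding A_char by blast
    obtain w2 k2 where 2: "y = w2 + k2" "b = t0 w2 + C k2" "w2 \<in> W0" "(k2,0) \<in> Tt1"
      using yb unfolding A_char by blast
    have wd: "w1 - w2 \<in> W0" and t0d: "t0 (w1 - w2) = t0 w1 - t0 w2" using W0_diff[OF 1(3) 2(3)] by auto
    have kd: "(k1 - k2, 0) \<in> Tt1" using ker_diff[OF 1(4) 2(4)] .
    have "t0 (w1 - w2) + C (k1 - k2) = 0" using ab 1 2 unfolding t0d C_diff by (simp add: algebra_simps)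
    then have "mu * norm ((w1 - w2) + (k1 - k2)) \<le> 0" using coer2[OF wd kd] by simp
    then have "(w1 - w2) + (k1 - k2) = 0" using mupos by (simp add: mult_le_0_iff)
    then show "x = y" using 1 2 by (simp add: algebra_simps)
  qed
  show "op_apply ?A ` op_dom ?A = UNIV"
  proof (intro equalityI subsetI)
    fix f :: 'a
    obtain u where "(u,f) \<in> ?A" using L3 by blast
    then show "f \<in> op_apply ?A ` op_dom ?A" unfolding op_dom_def using A_apply by force
  qed simp
qed

end


theorem corollary3p2:
  fixes T0 Tt0 :: "('a::{complex_inner, complete_space} \<times> 'a) set"
  assumes "closed_friedrichs_pair T0 Tt0"
  defines "T1 \<equiv> op_adjoint Tt0"
    and "Tt1 \<equiv> op_adjoint T0"
    and "W0 \<equiv> op_dom T0"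
  shows "op_adjoint (op_restrict T1 (set_plus_vec W0 (op_ker Tt1))) = op_restrict Tt1 (set_plus_vec W0 (op_ker T1))
       \<and> op_adjoint (op_restrict Tt1 (set_plus_vec W0 (op_ker T1))) = op_restrict T1 (set_plus_vec W0 (op_ker Tt1))
       \<and> bij_betw (op_apply (op_restrict T1 (set_plus_vec W0 (op_ker Tt1))))
           (op_dom (op_restrict T1 (set_plus_vec W0 (op_ker Tt1)))) UNIV
       \<and> bij_betw (op_apply (op_restrict Tt1 (set_plus_vec W0 (op_ker T1))))
           (op_dom (op_restrict Tt1 (set_plus_vec W0 (op_ker T1)))) UNIV"
proof -
  have lin0: "is_linop T0" and lint: "is_linop Tt0" and dense: "closure (Domain T0) = UNIV"
    and domeq: "Domain Tt0 = Domain T0"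
    and sym0: "\<And>x y. x \<in> Domain T0 \<Longrightarrow> y \<in> Domain T0 \<Longrightarrow> cinner (op_apply T0 x) y = cinner x (op_apply Tt0 y)"
    and cl0: "closed T0" and clt: "closed Tt0"
    using assms(1) unfolding closed_friedrichs_pair_def friedrichs_pair_def densely_defined_def op_dom_def closed_op_def
    by auto
  obtain c where cpos: "c > 0" and bnd0: "\<And>x. x \<in> Domain T0 \<Longrightarrow> norm (op_apply T0 x + op_apply Tt0 x) \<le> c * norm x"
    using assms(1) unfolding closed_friedrichs_pair_def friedrichs_pair_def op_dom_def by blast
  obtain mu where mupos: "mu > 0" and pos0: "\<And>x. x \<in> Domain T0 \<Longrightarrow>
      cinner (op_apply T0 x + op_apply Tt0 x) x \<ge> complex_of_real (2 * mu * (norm x)\<^sup>2)"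
    using assms(1) unfolding closed_friedrichs_pair_def friedrichs_pair_def op_dom_def by blast
  have symm: "cinner a y = cinner x b" if "(x,a) \<in> T0" "(y,b) \<in> Tt0" for x y a b
  proof -
    have "x \<in> Domain T0" "y \<in> Domain T0" using that domeq by auto
    from sym0[OF this] show ?thesis using op_apply_eq[OF lin0 that(1)] op_apply_eq[OF lint that(2)] by simp
  qed
  have bnd: "norm (a + b) \<le> c * norm x" if "(x,a) \<in> T0" "(x,b) \<in> Tt0" for x a b
    using bnd0[of x] that op_apply_eq[OF lin0 that(1)] op_apply_eq[OF lint that(2)] by auto
  have pos: "2*mu*(norm x)^2 \<le> Re (cinner (a + b) x)" if "(x,a) \<in> T0" "(x,b) \<in> Tt0" for x a b
    using pos0[of x] that op_apply_eq[OF lin0 that(1)] op_apply_eq[OF lint that(2)]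
    by (auto simp: less_eq_complex_def)
  interpret a: fp T0 Tt0 c mu
    by (unfold_locales) (use lin0 lint dense domeq symm cpos bnd mupos pos cl0 clt in auto)
  have symm': "cinner a y = cinner x b" if "(x,a) \<in> Tt0" "(y,b) \<in> T0" for x y a b
    using symm[OF that(2) that(1)] cinner_commute[of b x] cinner_commute[of y a] by simp
  have bnd': "norm (a + b) \<le> c * norm x" if "(x,a) \<in> Tt0" "(x,b) \<in> T0" for x a b
    using bnd[OF that(2) that(1)] by (simp add: add.commute)
  have pos': "2*mu*(norm x)^2 \<le> Re (cinner (a + b) x)" if "(x,a) \<in> Tt0" "(x,b) \<in> T0" for x a b
    using pos[OF that(2) that(1)] by (simp add: add.commute)
  interpret b: fp Tt0 T0 c mu
    by (unfold_locales) (use lin0 lint dense domeq symm' cpos bnd' mupos pos' cl0 clt in auto)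
  define A where "A = op_restrict T1 (set_plus_vec W0 (op_ker Tt1))"
  define B where "B = op_restrict Tt1 (set_plus_vec W0 (op_ker T1))"
  have eA: "A = op_restrict a.T1 (set_plus_vec a.W0 (op_ker a.Tt1))"
    unfolding A_def assms(2-4) a.T1_def a.Tt1_def a.W0_def op_dom_def ..
  have eA': "A = op_restrict b.Tt1 (set_plus_vec b.W0 (op_ker b.T1))"
    unfolding A_def assms(2-4) b.T1_def b.Tt1_def b.W0_def op_dom_def domeq ..
  have eB: "B = op_restrict b.T1 (set_plus_vec b.W0 (op_ker b.Tt1))"
    unfolding B_def assms(2-4) b.T1_def b.Tt1_def b.W0_def op_dom_def domeq ..
  have eB': "B = op_restrict a.Tt1 (set_plus_vec a.W0 (op_ker a.T1))"
    unfolding B_def assms(2-4) a.T1_def a.Tt1_def a.W0_def op_dom_def ..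
  have 1: "op_adjoint A = B"
  proof (rule gen_adj_eq)
    show "B \<subseteq> op_adjoint A" using b.L1 unfolding eB eA' .
    show "\<exists>u. (u,f) \<in> B" for f using b.L3 unfolding eB .
    show "y = 0" if "(y,0) \<in> op_adjoint A" for y using a.L2 that unfolding eA .
  qed
  have 2: "op_adjoint B = A"
  proof (rule gen_adj_eq)
    show "A \<subseteq> op_adjoint B" using a.L1 unfolding eA eB' .
    show "\<exists>u. (u,f) \<in> A" for f using a.L3 unfolding eA .
    show "y = 0" if "(y,0) \<in> op_adjoint B" for y using b.L2 that unfolding eB .
  qed
  have 3: "bij_betw (op_apply A) (op_dom A) UNIV" unfolding eA by (rule a.bij)
  have 4: "bij_betw (op_apply B) (op_dom B) UNIV" unfolding eB by (rule b.bij)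
  show ?thesis using 1 2 3 4 unfolding A_def B_def by blast
qed

end
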